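(* Let $(G,X,\alpha)$ and $(H,X,\gamma)$ be $G$-spaces (with the same phase space $X$), and let $(\varphi,\mathrm{id}):(G,X,\alpha)\to(H,X,\gamma)$ be an equivariant pair of maps, i.e. $\varphi:G\to H$ is a continuous homomorphism with $\alpha(g,x)=\gamma(\varphi(g),x)$ for all $g\in G$, $x\in X$. Assume $\varphi$ is an epimorphism (surjective). Then: (a) $\ker\varphi\subset \ker_\alpha$; (b) $\varphi(\ker_\alpha)=\ker_\gamma$, and if $\alpha$ is effective then $\gamma$ is effective; (c) $Gx=Hx$ for every $x\in X$; in particular, if $\alpha$ is transitive then $\gamma$ is transitive; (d) if $\alpha$ is open (resp. $d$-open) then $\gamma$ is open (resp. $d$-open), and the components of the actions $\alpha$ and $\gamma$ coincide; (e) if $\mathcal U$ is an equiuniformity on $X$ for $(H,X,\gamma)$, then $\mathcal U$ is an equiuniformity on $X$ for $(G,X,\alpha)$; hence if $(H,X,\gamma)$ is $G$-Tychonoff then $(G,X,\alpha)$ is $G$-Tychonoff.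
   Context: All spaces are Tychonoff and all maps continuous. A $G$-space $(G,X,\alpha)$ is a topological group $G$ with a continuous action $\alpha:G\times X\to X$ (written $gx=\alpha(g,x)$). The kernel of the action is $\ker_\alpha=\{g\in G: gx=x \text{ for all } x\in X\}$; the action is effective if $\ker_\alpha=\{e\}$ and transitive if $Gx=X$ for some (any) $x$. $N_G(e)$ denotes the family of open neighborhoods of the unit. The action is open if $x\in\operatorname{Int}(Ox)$ for all $x\in X$, $O\in N_G(e)$, and $d$-open if $x\in\operatorname{Int}(\operatorname{cl}(Ox))$ for all $x\in X$, $O\in N_G(e)$. For a $d$-open action, $X$ is a disjoint union of clopen sets $\operatorname{cl}(Gx)$, $x\in X$, called the components of the action. Uniformities are given by families of open covers. A uniformity $\mathcal U$ on $X$ is an equiuniformity for $(G,X,\alpha)$ if it is saturated ($gu=\{gU:U\in u\}\in\mathcal U$ for all $u\in\mathcal U$, $g\in G$) and bounded (for every $u\in\mathcal U$ there are $O\in N_G(e)$ and $v\in\mathcal U$ such that the cover $\{OV:V\in v\}$ refines $u$). $(G,X,\alpha)$ is $G$-Tychonoff if there is a compactification $bX$ of $X$ and a continuous action of $G$ on $bX$ extending $\alpha$ (equivalently, via an equivariant embedding $(\mathrm{id},f)$). *)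

theory Defs
  imports "HOL-Analysis.Analysis" "HOL-Algebra.Coset"
begin

definition tychonoff_space :: "'a topology \<Rightarrow> bool" where
  "tychonoff_space X \<longleftrightarrow> completely_regular_space X \<and> t1_space X"

definition topological_group :: "('g, 'm) monoid_scheme \<Rightarrow> 'g topology \<Rightarrow> bool" where
  "topological_group G TG \<longleftrightarrow>
     group G \<and> topspace TG = carrier G \<and>
     continuous_map (prod_topology TG TG) TG (\<lambda>(a, b). a \<otimes>\<^bsub>G\<^esub> b) \<and>
     continuous_map TG TG (\<lambda>a. inv\<^bsub>G\<^esub> a)"

definition G_space :: "('g, 'm) monoid_scheme \<Rightarrow> 'g topology \<Rightarrow> 'x topology \<Rightarrow> ('g \<Rightarrow> 'x \<Rightarrow> 'x) \<Rightarrow> bool" where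
  "G_space G TG X \<alpha> \<longleftrightarrow>
     topological_group G TG \<and>
     continuous_map (prod_topology TG X) X (\<lambda>(g, x). \<alpha> g x) \<and>
     (\<forall>x\<in>topspace X. \<alpha> \<one>\<^bsub>G\<^esub> x = x) \<and>
     (\<forall>g\<in>carrier G. \<forall>h\<in>carrier G. \<forall>x\<in>topspace X. \<alpha> (g \<otimes>\<^bsub>G\<^esub> h) x = \<alpha> g (\<alpha> h x))"

definition action_kernel :: "('g, 'm) monoid_scheme \<Rightarrow> 'x topology \<Rightarrow> ('g \<Rightarrow> 'x \<Rightarrow> 'x) \<Rightarrow> 'g set" where
  "action_kernel G X \<alpha> = {g \<in> carrier G. \<forall>x\<in>topspace X. \<alpha> g x = x}"

definition effective_action :: "('g, 'm) monoid_scheme \<Rightarrow> 'x topology \<Rightarrow> ('g \<Rightarrow> 'x \<Rightarrow> 'x) \<Rightarrow> bool" where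
  "effective_action G X \<alpha> \<longleftrightarrow> action_kernel G X \<alpha> = {\<one>\<^bsub>G\<^esub>}"

definition act_set :: "('g \<Rightarrow> 'x \<Rightarrow> 'x) \<Rightarrow> 'g set \<Rightarrow> 'x set \<Rightarrow> 'x set" where
  "act_set \<alpha> W0 V = {\<alpha> g y | g y. g \<in> W0 \<and> y \<in> V}"

definition orbit_of :: "('g, 'm) monoid_scheme \<Rightarrow> ('g \<Rightarrow> 'x \<Rightarrow> 'x) \<Rightarrow> 'x \<Rightarrow> 'x set" where
  "orbit_of G \<alpha> x = act_set \<alpha> (carrier G) {x}"

definition transitive_action :: "('g, 'm) monoid_scheme \<Rightarrow> 'x topology \<Rightarrow> ('g \<Rightarrow> 'x \<Rightarrow> 'x) \<Rightarrow> bool" where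
  "transitive_action G X \<alpha> \<longleftrightarrow> (\<exists>x\<in>topspace X. orbit_of G \<alpha> x = topspace X)"

definition unit_nbhds :: "('g, 'm) monoid_scheme \<Rightarrow> 'g topology \<Rightarrow> 'g set set" where
  "unit_nbhds G TG = {W0. openin TG W0 \<and> \<one>\<^bsub>G\<^esub> \<in> W0}"

definition open_action :: "('g, 'm) monoid_scheme \<Rightarrow> 'g topology \<Rightarrow> 'x topology \<Rightarrow> ('g \<Rightarrow> 'x \<Rightarrow> 'x) \<Rightarrow> bool" where
  "open_action G TG X \<alpha> \<longleftrightarrow>
     (\<forall>x\<in>topspace X. \<forall>W0\<in>unit_nbhds G TG. x \<in> X interior_of (act_set \<alpha> W0 {x}))"

definition d_open_action :: "('g, 'm) monoid_scheme \<Rightarrow> 'g topology \<Rightarrow> 'x topology \<Rightarrow> ('g \<Rightarrow> 'x \<Rightarrow> 'x) \<Rightarrow> bool" where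
  "d_open_action G TG X \<alpha> \<longleftrightarrow>
     (\<forall>x\<in>topspace X. \<forall>W0\<in>unit_nbhds G TG. x \<in> X interior_of (X closure_of (act_set \<alpha> W0 {x})))"

definition action_components :: "('g, 'm) monoid_scheme \<Rightarrow> 'x topology \<Rightarrow> ('g \<Rightarrow> 'x \<Rightarrow> 'x) \<Rightarrow> 'x set set" where
  "action_components G X \<alpha> = (\<lambda>x. X closure_of (orbit_of G \<alpha> x)) ` topspace X"

definition open_cover :: "'x topology \<Rightarrow> 'x set set \<Rightarrow> bool" where
  "open_cover X u \<longleftrightarrow> (\<forall>U\<in>u. openin X U) \<and> \<Union>u = topspace X"

definition refines :: "'x set set \<Rightarrow> 'x set set \<Rightarrow> bool" where
  "refines u v \<longleftrightarrow> (\<forall>U\<in>u. \<exists>V\<in>v. U \<subseteq> V)"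

definition cover_star :: "'x set \<Rightarrow> 'x set set \<Rightarrow> 'x set" where
  "cover_star A u = \<Union>{U \<in> u. U \<inter> A \<noteq> {}}"

definition uniformity_on :: "'x topology \<Rightarrow> 'x set set set \<Rightarrow> bool" where
  "uniformity_on X \<U> \<longleftrightarrow>
     \<U> \<noteq> {} \<and>
     (\<forall>u\<in>\<U>. open_cover X u) \<and>
     (\<forall>u\<in>\<U>. \<forall>v. open_cover X v \<and> refines u v \<longrightarrow> v \<in> \<U>) \<and>
     (\<forall>u\<in>\<U>. \<forall>v\<in>\<U>. \<exists>w\<in>\<U>. refines w u \<and> refines w v) \<and>
     (\<forall>u\<in>\<U>. \<exists>v\<in>\<U>. refines ((\<lambda>V. cover_star V v) ` v) u) \<and>
     (\<forall>x\<in>topspace X. \<forall>W. openin X W \<and> x \<in> W \<longrightarrow> (\<exists>u\<in>\<U>. cover_star {x} u \<subseteq> W))"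

definition saturated_unif :: "('g, 'm) monoid_scheme \<Rightarrow> ('g \<Rightarrow> 'x \<Rightarrow> 'x) \<Rightarrow> 'x set set set \<Rightarrow> bool" where
  "saturated_unif G \<alpha> \<U> \<longleftrightarrow> (\<forall>u\<in>\<U>. \<forall>g\<in>carrier G. (\<lambda>U. \<alpha> g ` U) ` u \<in> \<U>)"

definition bounded_unif :: "('g, 'm) monoid_scheme \<Rightarrow> 'g topology \<Rightarrow> ('g \<Rightarrow> 'x \<Rightarrow> 'x) \<Rightarrow> 'x set set set \<Rightarrow> bool" where
  "bounded_unif G TG \<alpha> \<U> \<longleftrightarrow>
     (\<forall>u\<in>\<U>. \<exists>W0\<in>unit_nbhds G TG. \<exists>v\<in>\<U>. refines ((\<lambda>V. act_set \<alpha> W0 V) ` v) u)"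

definition equiuniformity :: "('g, 'm) monoid_scheme \<Rightarrow> 'g topology \<Rightarrow> 'x topology \<Rightarrow> ('g \<Rightarrow> 'x \<Rightarrow> 'x) \<Rightarrow> 'x set set set \<Rightarrow> bool" where
  "equiuniformity G TG X \<alpha> \<U> \<longleftrightarrow>
     uniformity_on X \<U> \<and> saturated_unif G \<alpha> \<U> \<and> bounded_unif G TG \<alpha> \<U>"

text \<open>(G,X,alpha) is G-Tychonoff, witnessed by a compactification carried by the type 'k:
  a compact Hausdorff K, a dense embedding f of X into K and a continuous action beta of G on K
  with f equivariant (so (id, f) is an equivariant embedding).  The theorem below quantifies
  over all types 'k.\<close>
definition G_tychonoff :: "'k itself \<Rightarrow> ('g, 'm) monoid_scheme \<Rightarrow> 'g topology \<Rightarrow> 'x topology \<Rightarrow> ('g \<Rightarrow> 'x \<Rightarrow> 'x) \<Rightarrow> bool" where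
  "G_tychonoff _ G TG X \<alpha> \<longleftrightarrow>
     (\<exists>(K :: 'k topology) f \<beta>.
        compact_space K \<and> Hausdorff_space K \<and>
        embedding_map X K f \<and> K closure_of (f ` topspace X) = topspace K \<and>
        G_space G TG K \<beta> \<and>
        (\<forall>g\<in>carrier G. \<forall>x\<in>topspace X. \<beta> g (f x) = f (\<alpha> g x)))"

end

theory Submission
  imports Defs
begin

theorem proposition2p11:
  fixes G :: "('g, 'm) monoid_scheme" and TG :: "'g topology"
    and H :: "('h, 'n) monoid_scheme" and TH :: "'h topology"
    and X :: "'x topology"
    and \<alpha> :: "'g \<Rightarrow> 'x \<Rightarrow> 'x" and \<gamma> :: "'h \<Rightarrow> 'x \<Rightarrow> 'x"
    and \<phi> :: "'g \<Rightarrow> 'h"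
  assumes tychG: "tychonoff_space TG" and tychH: "tychonoff_space TH"
    and tychX: "tychonoff_space X"
    and GX: "G_space G TG X \<alpha>" and HX: "G_space H TH X \<gamma>"
    and hom: "\<phi> \<in> hom G H" and cont: "continuous_map TG TH \<phi>"
    and equiv: "\<forall>g\<in>carrier G. \<forall>x\<in>topspace X. \<alpha> g x = \<gamma> (\<phi> g) x"
    and epi: "\<phi> ` carrier G = carrier H"
  shows
    "kernel G H \<phi> \<subseteq> action_kernel G X \<alpha>
     \<and> (\<phi> ` action_kernel G X \<alpha> = action_kernel H X \<gamma>
        \<and> (effective_action G X \<alpha> \<longrightarrow> effective_action H X \<gamma>))
     \<and> ((\<forall>x\<in>topspace X. orbit_of G \<alpha> x = orbit_of H \<gamma> x)
        \<and> (transitive_action G X \<alpha> \<longrightarrow> transitive_action H X \<gamma>))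
     \<and> ((open_action G TG X \<alpha> \<longrightarrow> open_action H TH X \<gamma>)
        \<and> (d_open_action G TG X \<alpha> \<longrightarrow> d_open_action H TH X \<gamma>)
        \<and> (open_action G TG X \<alpha> \<or> d_open_action G TG X \<alpha> \<longrightarrow>
             action_components G X \<alpha> = action_components H X \<gamma>))
     \<and> ((\<forall>\<U>. equiuniformity H TH X \<gamma> \<U> \<longrightarrow> equiuniformity G TG X \<alpha> \<U>)
        \<and> (G_tychonoff TYPE('k) H TH X \<gamma> \<longrightarrow> G_tychonoff TYPE('k) G TG X \<alpha>))"
proof -
  have tgG: "topological_group G TG" and tgH: "topological_group H TH"
    using GX HX by (auto simp: G_space_def)
  have grG: "group G" and grH: "group H" and topG: "topspace TG = carrier G"
    using tgG tgH by (auto simp: topological_group_def)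
  interpret gh: group_hom G H \<phi> using grG grH hom by (simp add: group_hom_def group_hom_axioms_def)
  have one: "\<phi> \<one>\<^bsub>G\<^esub> = \<one>\<^bsub>H\<^esub>" by simp
  have phimem: "\<And>g. g \<in> carrier G \<Longrightarrow> \<phi> g \<in> carrier H" using hom by (simp add: hom_def)
  have gid: "\<forall>x\<in>topspace X. \<gamma> \<one>\<^bsub>H\<^esub> x = x" using HX by (simp add: G_space_def)
  have A: "kernel G H \<phi> \<subseteq> action_kernel G X \<alpha>"
    using equiv gid by (auto simp: kernel_def action_kernel_def)
  have B1: "\<phi> ` action_kernel G X \<alpha> = action_kernel H X \<gamma>"
  proof
    show "\<phi> ` action_kernel G X \<alpha> \<subseteq> action_kernel H X \<gamma>"
      using equiv phimem by (auto simp: action_kernel_def)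
  next
    show "action_kernel H X \<gamma> \<subseteq> \<phi> ` action_kernel G X \<alpha>"
    proof
      fix h assume h: "h \<in> action_kernel H X \<gamma>"
      then obtain g where g: "g \<in> carrier G" "h = \<phi> g" using epi by (auto simp: action_kernel_def)
      then have "g \<in> action_kernel G X \<alpha>" using h equiv by (auto simp: action_kernel_def)
      then show "h \<in> \<phi> ` action_kernel G X \<alpha>" using g by auto
    qed
  qed
  have B2: "effective_action G X \<alpha> \<longrightarrow> effective_action H X \<gamma>"
    using B1 one by (auto simp: effective_action_def)
  have C1: "\<forall>x\<in>topspace X. orbit_of G \<alpha> x = orbit_of H \<gamma> x"
  proof
    fix x assume x: "x \<in> topspace X"
    show "orbit_of G \<alpha> x = orbit_of H \<gamma> x"
    proof
      show "orbit_of G \<alpha> x \<subseteq> orbit_of H \<gamma> x"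
        using x equiv phimem by (auto simp: orbit_of_def act_set_def)
    next
      show "orbit_of H \<gamma> x \<subseteq> orbit_of G \<alpha> x"
      proof
        fix y assume "y \<in> orbit_of H \<gamma> x"
        then obtain h where h: "h \<in> carrier H" "y = \<gamma> h x" by (auto simp: orbit_of_def act_set_def)
        then obtain g where g: "g \<in> carrier G" "h = \<phi> g" using epi by auto
        then have "y = \<alpha> g x" using h x equiv by auto
        then show "y \<in> orbit_of G \<alpha> x" using g by (auto simp: orbit_of_def act_set_def)
      qed
    qed
  qed
  have C2: "transitive_action G X \<alpha> \<longrightarrow> transitive_action H X \<gamma>"
    using C1 by (auto simp: transitive_action_def)
  have pull: "\<And>W. W \<in> unit_nbhds H TH \<Longrightarrow> {g \<in> carrier G. \<phi> g \<in> W} \<in> unit_nbhds G TG"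
  proof -
    fix W assume W: "W \<in> unit_nbhds H TH"
    have "openin TG {g \<in> topspace TG. \<phi> g \<in> W}"
      using W cont by (auto simp: unit_nbhds_def intro: openin_continuous_map_preimage)
    then show "{g \<in> carrier G. \<phi> g \<in> W} \<in> unit_nbhds G TG"
      using W topG by (auto simp: unit_nbhds_def)
  qed
  have sub: "\<And>W V. V \<subseteq> topspace X \<Longrightarrow>
      act_set \<alpha> {g \<in> carrier G. \<phi> g \<in> W} V \<subseteq> act_set \<gamma> W V"
    using equiv by (auto simp: act_set_def) (metis subsetD)
  have D1: "open_action G TG X \<alpha> \<longrightarrow> open_action H TH X \<gamma>"
    unfolding open_action_def
  proof (intro impI ballI)
    fix x W assume o: "\<forall>x\<in>topspace X. \<forall>W0\<in>unit_nbhds G TG. x \<in> X interior_of act_set \<alpha> W0 {x}"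
      and x: "x \<in> topspace X" and W: "W \<in> unit_nbhds H TH"
    have "x \<in> X interior_of act_set \<alpha> {g \<in> carrier G. \<phi> g \<in> W} {x}" using o x pull[OF W] by blast
    then show "x \<in> X interior_of act_set \<gamma> W {x}"
      using interior_of_mono[OF sub[of "{x}" W]] x by auto
  qed
  have D2: "d_open_action G TG X \<alpha> \<longrightarrow> d_open_action H TH X \<gamma>"
    unfolding d_open_action_def
  proof (intro impI ballI)
    fix x W assume o: "\<forall>x\<in>topspace X. \<forall>W0\<in>unit_nbhds G TG. x \<in> X interior_of (X closure_of act_set \<alpha> W0 {x})"
      and x: "x \<in> topspace X" and W: "W \<in> unit_nbhds H TH"
    have "x \<in> X interior_of (X closure_of act_set \<alpha> {g \<in> carrier G. \<phi> g \<in> W} {x})" using o x pull[OF W] by blast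
    then show "x \<in> X interior_of (X closure_of act_set \<gamma> W {x})"
      using interior_of_mono[OF closure_of_mono[OF sub[of "{x}" W]]] x by auto
  qed
  have D3: "action_components G X \<alpha> = action_components H X \<gamma>"
    using C1 by (auto simp: action_components_def)
  have E1: "\<forall>\<U>. equiuniformity H TH X \<gamma> \<U> \<longrightarrow> equiuniformity G TG X \<alpha> \<U>"
  proof (intro allI impI)
    fix \<U> assume e: "equiuniformity H TH X \<gamma> \<U>"
    then have un: "uniformity_on X \<U>" and sat: "saturated_unif H \<gamma> \<U>" and bd: "bounded_unif H TH \<gamma> \<U>"
      by (auto simp: equiuniformity_def)
    have subs: "\<And>u U. u \<in> \<U> \<Longrightarrow> U \<in> u \<Longrightarrow> U \<subseteq> topspace X"
      using un by (auto simp: uniformity_on_def open_cover_def)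
    have "saturated_unif G \<alpha> \<U>"
      unfolding saturated_unif_def
    proof (intro ballI)
      fix u g assume u: "u \<in> \<U>" and g: "g \<in> carrier G"
      have "(\<lambda>U. \<alpha> g ` U) ` u = (\<lambda>U. \<gamma> (\<phi> g) ` U) ` u"
      proof (rule image_cong[OF refl])
        fix U assume "U \<in> u"
        then have "U \<subseteq> topspace X" using subs u by blast
        then show "\<alpha> g ` U = \<gamma> (\<phi> g) ` U" using equiv g by (auto intro!: image_cong)
      qed
      then show "(\<lambda>U. \<alpha> g ` U) ` u \<in> \<U>" using sat u phimem[OF g] by (simp add: saturated_unif_def)
    qed
    moreover have "bounded_unif G TG \<alpha> \<U>"
      unfolding bounded_unif_def
    proof
      fix u assume u: "u \<in> \<U>"
      then obtain W v where W: "W \<in> unit_nbhds H TH" and v: "v \<in> \<U>"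
        and r: "refines ((\<lambda>V. act_set \<gamma> W V) ` v) u"
        using bd by (auto simp: bounded_unif_def)
      have "refines ((\<lambda>V. act_set \<alpha> {g \<in> carrier G. \<phi> g \<in> W} V) ` v) u"
        unfolding refines_def
      proof
        fix U assume "U \<in> (\<lambda>V. act_set \<alpha> {g \<in> carrier G. \<phi> g \<in> W} V) ` v"
        then obtain V where V: "V \<in> v" "U = act_set \<alpha> {g \<in> carrier G. \<phi> g \<in> W} V" by auto
        then have "U \<subseteq> act_set \<gamma> W V" using sub subs v by blast
        moreover obtain U' where "U' \<in> u" "act_set \<gamma> W V \<subseteq> U'" using r V by (auto simp: refines_def)
        ultimately show "\<exists>U'\<in>u. U \<subseteq> U'" by blast
      qed
      then show "\<exists>W0\<in>unit_nbhds G TG. \<exists>v\<in>\<U>. refines ((\<lambda>V. act_set \<alpha> W0 V) ` v) u"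
        using pull[OF W] v by blast
    qed
    ultimately show "equiuniformity G TG X \<alpha> \<U>" using un by (simp add: equiuniformity_def)
  qed
  have E2: "G_tychonoff TYPE('k) H TH X \<gamma> \<longrightarrow> G_tychonoff TYPE('k) G TG X \<alpha>"
  proof
    assume "G_tychonoff TYPE('k) H TH X \<gamma>"
    then obtain K :: "'k topology" and f \<beta> where
      K: "compact_space K" "Hausdorff_space K" "embedding_map X K f"
         "K closure_of (f ` topspace X) = topspace K"
      and KH: "G_space H TH K \<beta>"
      and eq: "\<forall>h\<in>carrier H. \<forall>x\<in>topspace X. \<beta> h (f x) = f (\<gamma> h x)"
      unfolding G_tychonoff_def by blast
    have bc: "continuous_map (prod_topology TH K) K (\<lambda>(h, k). \<beta> h k)"
      and b1: "\<forall>x\<in>topspace K. \<beta> \<one>\<^bsub>H\<^esub> x = x"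
      and bm: "\<forall>g\<in>carrier H. \<forall>h\<in>carrier H. \<forall>x\<in>topspace K. \<beta> (g \<otimes>\<^bsub>H\<^esub> h) x = \<beta> g (\<beta> h x)"
      using KH by (auto simp: G_space_def)
    have c1: "continuous_map (prod_topology TG K) (prod_topology TH K) (\<lambda>(g, k). (\<phi> g, k))"
      using cont continuous_map_compose[OF continuous_map_fst cont]
      by (simp add: continuous_map_paired continuous_map_snd case_prod_unfold o_def)
    have "continuous_map (prod_topology TG K) K ((\<lambda>(h, k). \<beta> h k) \<circ> (\<lambda>(g, k). (\<phi> g, k)))"
      using continuous_map_compose[OF c1 bc] .
    then have c2: "continuous_map (prod_topology TG K) K (\<lambda>(g, k). \<beta> (\<phi> g) k)"
      by (simp add: o_def case_prod_unfold)
    have "G_space G TG K (\<lambda>g. \<beta> (\<phi> g))"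
      unfolding G_space_def using tgG c2 b1 bm phimem by auto
    moreover have "\<forall>g\<in>carrier G. \<forall>x\<in>topspace X. \<beta> (\<phi> g) (f x) = f (\<alpha> g x)"
      using eq equiv phimem by auto
    ultimately show "G_tychonoff TYPE('k) G TG X \<alpha>"
      unfolding G_tychonoff_def using K by blast
  qed
  show ?thesis using A B1 B2 C1 C2 D1 D2 D3 E1 E2 by blast
qed

end
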